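(* Let $a,b$ be positive integers and $h(j)=aj+b$ for $j\ge0$, $h(j)=0$ for $j<0$. Then $$\operatorname{hdepth}(h)=\begin{cases}1,& a<b,\\ 2,& b\le a<2b,\\ 3,& 2b\le a<3b,\\ 4,& 3b\le a\le 4b,\\ 3,& a>4b.\end{cases}$$
   Context: For a nonzero function $h:\mathbb Z\to\mathbb Z_{\ge 0}$ with $h(j)=0$ for all sufficiently negative $j$, and integers $k\le d$, set $\beta_k^d(h)=\sum_{j\le k}(-1)^{k-j}\binom{d-j}{k-j}h(j)$, and $\operatorname{hdepth}(h)=\max\{d\in\mathbb Z:\ \beta_k^d(h)\ge 0\text{ for all integers }k\le d\}$. *)

theory Defs
  imports Main
begin

text \<open>The sum is taken over the (finite, for the h considered) set of j <= k with h j nonzero;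
  terms with h j = 0 contribute nothing.\<close>
definition beta :: "int \<Rightarrow> int \<Rightarrow> (int \<Rightarrow> int) \<Rightarrow> int" where
  "beta k d h = (\<Sum>j \<in> {j. j \<le> k \<and> h j \<noteq> 0}.
      (-1) ^ nat (k - j) * int (nat (d - j) choose nat (k - j)) * h j)"

definition hdepth :: "(int \<Rightarrow> int) \<Rightarrow> int" where
  "hdepth h = (GREATEST d::int. \<forall>k. k \<le> d \<longrightarrow> beta k d h \<ge> 0)"

end

theory Submission
  imports Defs
begin

lemma two_choose2: "2 * int (n choose 2) = int n * (int n - 1)"
proof -
  have "even (n * (n - 1))" by (cases "even n") auto
  then have "2 * (n choose 2) = n * (n - 1)" by (simp add: choose_two)
  then have "int (2 * (n choose 2)) = int (n * (n - 1))" by simp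
  then show ?thesis by (cases n) (auto simp: algebra_simps)
qed

lemma sets_k:
  fixes a b :: int
  assumes "a > 0" "b > 0"
  defines "h \<equiv> (\<lambda>j::int. if j \<ge> 0 then a * j + b else 0)"
  shows "{j. j \<le> 0 \<and> h j \<noteq> 0} = {0}"
    "{j. j \<le> 1 \<and> h j \<noteq> 0} = {0,1}"
    "{j. j \<le> 2 \<and> h j \<noteq> 0} = {0,1,2}"
    "{j. j \<le> 3 \<and> h j \<noteq> 0} = {0,1,2,3}"
    "{j. j \<le> 4 \<and> h j \<noteq> 0} = {0,1,2,3,4}"
    "k < 0 \<Longrightarrow> {j. j \<le> k \<and> h j \<noteq> 0} = {}"
  using assms by (auto simp: h_def add_pos_pos)

lemma beta_vals:
  fixes a b :: int
  assumes "a > 0" "b > 0"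
  defines "h \<equiv> (\<lambda>j::int. if j \<ge> 0 then a * j + b else 0)"
  shows "k < 0 \<Longrightarrow> beta k d h = 0"
    "beta 0 d h = b"
    "d \<ge> 1 \<Longrightarrow> beta 1 d h = a + b - d * b"
    "d \<ge> 2 \<Longrightarrow> 2 * beta 2 d h = 2*(2*a+b) - 2*(d-1)*(a+b) + d*(d-1)*b"
    "beta 3 3 h = 2 * a"
    "beta 3 4 h = 2 * a - 2 * b"
    "beta 4 4 h = 2 * a + b"
    "beta 2 2 h = a + b" "beta 2 3 h = 2 * b" "beta 2 4 h = 4 * b - a"
proof -
  note S = sets_k[OF assms(1,2), folded h_def]
  show "k < 0 \<Longrightarrow> beta k d h = 0" 
  proof -
    assume "k < 0"
    then have "{j. j \<le> k \<and> h j \<noteq> 0} = {}" by (auto simp: h_def)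
    then show ?thesis unfolding beta_def by simp
  qed
  show "beta 0 d h = b" by (simp add: beta_def S h_def)
  show "d \<ge> 1 \<Longrightarrow> beta 1 d h = a + b - d * b"
  proof -
    assume "d \<ge> 1"
    then have "int (nat d choose 1) = d" "int (nat (d-1) choose 0) = 1" by auto
    then show ?thesis by (simp add: beta_def S h_def algebra_simps)
  qed
  show "d \<ge> 2 \<Longrightarrow> 2 * beta 2 d h = 2*(2*a+b) - 2*(d-1)*(a+b) + d*(d-1)*b"
  proof -
    assume d: "d \<ge> 2"
    have c1: "int (nat (d-1) choose 1) = d - 1" using d by auto
    have c2: "2 * int (nat d choose 2) = d * (d - 1)" using two_choose2[of "nat d"] d by simp
    have "beta 2 d h = int (nat d choose 2) * b - int (nat (d-1) choose 1) * (a + b) + (2*a+b)"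
      by (simp add: beta_def S h_def algebra_simps)
    moreover have "2 * int (nat d choose 2) * b = d * (d - 1) * b" using c2 by simp
    ultimately show ?thesis using c1 by (simp add: algebra_simps)
  qed
  show "beta 3 3 h = 2 * a" by (simp add: beta_def S h_def numeral_eq_Suc algebra_simps)
  show "beta 3 4 h = 2 * a - 2 * b" by (simp add: beta_def S h_def numeral_eq_Suc algebra_simps)
  show "beta 4 4 h = 2 * a + b" by (simp add: beta_def S h_def numeral_eq_Suc algebra_simps)
  show "beta 2 2 h = a + b" by (simp add: beta_def S h_def numeral_eq_Suc algebra_simps)
  show "beta 2 4 h = 4 * b - a" by (simp add: beta_def S h_def numeral_eq_Suc algebra_simps)
  show "beta 2 3 h = 2 * b" by (simp add: beta_def S h_def numeral_eq_Suc algebra_simps)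
qed

lemma ineq:
  fixes a b d :: int
  assumes "b > 0" "d \<ge> 5" "a \<ge> (d - 1) * b"
  shows "2*(2*a+b) - 2*(d-1)*(a+b) + d*(d-1)*b < 0"
proof -
  have "a * (d - 3) \<ge> (d - 1) * b * (d - 3)"
    using assms by (intro mult_right_mono) auto
  moreover have "b * (d*d - 5*d + 2) > 0"
  proof -
    have "d*d - 5*d + 2 > 0" 
    proof -
      have "d * d \<ge> 5 * d" using assms(2) by (intro mult_right_mono) auto
      then show ?thesis by linarith
    qed
    then show ?thesis using assms(1) by simp
  qed
  ultimately show ?thesis by (simp add: algebra_simps)
qed

theorem theorem3p5:
  fixes a b :: int
  assumes "a > 0" and "b > 0"
  shows "hdepth (\<lambda>j. if j \<ge> 0 then a * j + b else 0) =
    (if a < b then 1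
     else if a < 2 * b then 2
     else if a < 3 * b then 3
     else if a \<le> 4 * b then 4
     else 3)"
proof -
  define h where "h = (\<lambda>j::int. if j \<ge> 0 then a * j + b else 0)"
  note B = beta_vals[OF assms, folded h_def]
  define P where "P = (\<lambda>d. \<forall>k. k \<le> d \<longrightarrow> beta k d h \<ge> 0)"
  define t where "t = (if a < b then 1
     else if a < 2 * b then 2
     else if a < 3 * b then 3
     else if a \<le> 4 * b then 4
     else (3::int))"
  have k_cases: "\<And>k d::int. k \<le> d \<Longrightarrow> d \<le> 4 \<Longrightarrow> k < 0 \<or> k = 0 \<or> k = 1 \<or> k = 2 \<or> k = 3 \<or> k = 4"
    by auto
  have Pt: "P t"
    unfolding P_def
  proof (intro allI impI)
    fix k assume kt: "k \<le> t"
    have "t \<le> 4" by (simp add: t_def)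
    from k_cases[OF kt this] show "beta k t h \<ge> 0"
      using assms B kt by (auto simp: t_def split: if_splits)
  qed
  have notP: "\<not> P d" if "d > t" for d
  proof -
    have d1: "d \<ge> 2" using that by (simp add: t_def split: if_splits)
    show ?thesis
    proof (cases "d * b > a + b")
      case True
      then have "beta 1 d h < 0" using B(3) d1 by simp
      moreover have "1 \<le> d" using d1 by simp
      ultimately show ?thesis unfolding P_def by (meson not_le)
    next
      case False
      then have ab: "a \<ge> (d - 1) * b" by (simp add: algebra_simps)
      have "2 * beta 2 d h < 0"
      proof (cases "d \<ge> 5")
        case True
        then show ?thesis using B(4) d1 ineq[OF assms(2) True ab] by simp
      next
        case False
        have "d \<ge> 2" using d1 .
        have "d = 2 \<or> d = 3 \<or> d = 4" using d1 False by auto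
        then have "d = 4 \<and> a > 4 * b" using that ab assms by (auto simp: t_def split: if_splits)
        then show ?thesis using B(4)[of 4] by simp
      qed
      then have "beta 2 d h < 0" by simp
      then show ?thesis unfolding P_def using d1 by (meson not_le)
    qed
  qed
  have "hdepth h = t"
    unfolding hdepth_def P_def[symmetric]
    by (rule Greatest_equality) (use Pt notP in \<open>force+\<close>)
  then show ?thesis by (simp add: h_def t_def)
qed

end
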